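(* For $n\in\mathbb{N}$ let $h=2/\sqrt n$ and $x_k=-\sqrt n+\frac{2k}{\sqrt n}$ for $k=0,1,\dots,n$. For $\mu\in\mathbb{R}$ and $s>0$ define $$I_d=h\sum_{k=0}^n\exp\Big\{-\frac{s^2}{2}(x_k-\mu)^2\Big\},\qquad I_c=\int_{-\infty}^{\infty}\exp\Big\{-\frac{s^2}{2}(x-\mu)^2\Big\}dx.$$ Then $I_d\le\big(1+\frac{\eta s^2}{n}\big)I_c$, where $\eta=3/\sqrt{8\pi e}\le0.37$. *)

theory Defs
  imports "HOL-Analysis.Analysis"
begin

definition grid_h :: "nat \<Rightarrow> real" where
  "grid_h n = 2 / sqrt (real n)"

definition grid_x :: "nat \<Rightarrow> nat \<Rightarrow> real" where
  "grid_x n k = - sqrt (real n) + 2 * real k / sqrt (real n)"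

definition I_d :: "nat \<Rightarrow> real \<Rightarrow> real \<Rightarrow> real" where
  "I_d n \<mu> s = grid_h n * (\<Sum>k=0..n. exp (- (s^2 / 2) * (grid_x n k - \<mu>)^2))"

definition I_c :: "real \<Rightarrow> real \<Rightarrow> real" where
  "I_c \<mu> s = integral UNIV (\<lambda>x. exp (- (s^2 / 2) * (x - \<mu>)^2))"

definition eta :: real where
  "eta = 3 / sqrt (8 * pi * exp 1)"

end

theory Submission
  imports Defs "HOL-Probability.Distributions"
begin

lemma eta_bounds: "1/3 \<le> eta" "eta \<le> 0.37"
proof -
  have e: "\<bar>exp(1) - 5837465777 / 2147483648\<bar> \<le> (inverse(2 ^ 32)::real)" by (rule e_approx_32)
  have p: "3.141592653588 \<le> pi" "pi \<le> 3.1415926535899" by (rule pi_approx)+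
  have e1: "exp 1 \<ge> (2.718::real)" "exp 1 \<le> (2.719::real)" using e unfolding abs_le_iff by (simp_all add: field_simps)
  have "pi * exp 1 \<le> 3.15 * 2.72" using e1 p by (intro mult_mono) auto
  hence "8 * pi * exp 1 \<le> 81" by simp
  hence "sqrt (8 * pi * exp 1) \<le> sqrt 81" by (rule real_sqrt_le_mono)
  moreover have "sqrt 81 = (9::real)" by (rule real_sqrt_unique) auto
  ultimately have "sqrt (8 * pi * exp 1) \<le> 9" by simp
  moreover have "sqrt (8*pi*exp 1) > 0" by simp
  ultimately show "1/3 \<le> eta" unfolding eta_def by (simp add: field_simps)
  have "3.14 * 2.718 \<le> pi * exp 1" using e1 p by (intro mult_mono) auto
  hence "8.2^2 \<le> 8 * pi * exp 1" by (simp add: power2_eq_square mult.assoc)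
  hence "8.2 \<le> sqrt (8 * pi * exp 1)" using real_le_rsqrt by blast
  thus "eta \<le> 0.37" unfolding eta_def by (simp add: field_simps)
qed

lemma gauss_int: assumes "s > (0::real)"
  shows "(\<lambda>x. exp (- (s^2/2) * (x-\<mu>)^2)) integrable_on UNIV"
proof -
  have "integrable lborel (\<lambda>x. (sqrt (2*pi) / s) * normal_density \<mu> (1/s) x)"
    using assms by (intro integrable_mult_right integrable_normal_density) simp
  moreover have "(\<lambda>x. (sqrt (2*pi) / s) * normal_density \<mu> (1/s) x) = (\<lambda>x. exp (- (s^2/2) * (x-\<mu>)^2))"
  proof
    fix x
    have "sqrt (2 * pi * (1/s)^2) = sqrt (2*pi) / s" using assms
      by (simp add: real_sqrt_mult real_sqrt_divide power_divide)
    moreover have "- ((x - \<mu>)^2) / (2 * (1/s)^2) = - (s^2/2) * (x-\<mu>)^2" using assms by (simp add: field_simps)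
    ultimately show "(sqrt (2*pi) / s) * normal_density \<mu> (1/s) x = exp (- (s^2/2) * (x-\<mu>)^2)"
      using assms unfolding normal_density_def by simp
  qed
  ultimately show ?thesis using integrable_on_lborel by metis
qed

lemma exp_taylor3: assumes "v \<ge> (0::real)" shows "1 - v + v^2/2 - v^3/6 \<le> exp (-v)"
proof -
  obtain t where t: "exp (-v) = (\<Sum>m<4. ((-v) ^ m) / fact m) + (exp t / fact 4) * (-v) ^ 4"
    using Maclaurin_exp_le[of "-v" 4] by blast
  have "(\<Sum>m<4. ((-v) ^ m) / fact m) = 1 - v + v^2/2 - v^3/6"
    by (simp add: eval_nat_numeral fact_numeral)
  moreover have "(exp t / fact 4) * (-v) ^ 4 \<ge> 0" by simp
  ultimately show ?thesis using t by linarith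
qed


lemma poly_int: assumes "b > (0::real)"
  shows "((\<lambda>x. 1 - s^2*(x-c)^2/2 + s^4*(x-c)^4/8 - s^6*(x-c)^6/48) has_integral
          2*(b - s^2*b^3/6 + s^4*b^5/40 - s^6*b^7/336)) {c-b..c+b}"
proof -
  let ?P = "\<lambda>x::real. (x-c) - s^2*(x-c)^3/6 + s^4*(x-c)^5/40 - s^6*(x-c)^7/336"
  have d: "(?P has_real_derivative (1 - s^2*(x-c)^2/2 + s^4*(x-c)^4/8 - s^6*(x-c)^6/48)) (at x)" for x
    by (auto intro!: derivative_eq_intros simp: field_simps)
  have "((\<lambda>x. 1 - s^2*(x-c)^2/2 + s^4*(x-c)^4/8 - s^6*(x-c)^6/48) has_integral ?P (c+b) - ?P (c-b)) {c-b..c+b}"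
    apply (rule fundamental_theorem_of_calculus)
    using assms apply simp
    using d by (simp add: has_real_derivative_iff_has_vector_derivative[symmetric] has_field_derivative_at_within)
  moreover have "?P (c+b) - ?P (c-b) = 2*(b - s^2*b^3/6 + s^4*b^5/40 - s^6*b^7/336)"
    by (simp add: field_simps)
  ultimately show ?thesis by metis
qed

lemma odd_int: assumes "b > (0::real)" "s > 0"
  shows "((\<lambda>x. exp (-(s^2/2)*(x-c)^2) * (x-c)) has_integral 0) {c-b..c+b}"
proof -
  let ?P = "\<lambda>x::real. - exp (-(s^2/2)*(x-c)^2) / s^2"
  have d: "(?P has_real_derivative (exp (-(s^2/2)*(x-c)^2) * (x-c))) (at x)" for x
    using assms by (auto intro!: derivative_eq_intros simp: field_simps)
  have "((\<lambda>x. exp (-(s^2/2)*(x-c)^2) * (x-c)) has_integral ?P (c+b) - ?P (c-b)) {c-b..c+b}"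
    apply (rule fundamental_theorem_of_calculus)
    using assms apply simp
    using d by (simp add: has_real_derivative_iff_has_vector_derivative[symmetric] has_field_derivative_at_within)
  moreover have "?P (c+b) - ?P (c-b) = 0"
    by simp
  ultimately show ?thesis by simp
qed


lemma polyA: assumes "0 \<le> t" "t \<le> (4::real)" "e \<ge> 1/3"
  shows "1 \<le> (1 + e*t) * (1 - t/6 + t^2/40 - t^3/336)"
proof -
  have tt: "t*t \<le> 4*4" using assms by (intro mult_mono) auto
  have t2: "t^2 \<le> 4*t" using assms by (simp add: power2_eq_square mult_right_mono)
  have "t*(t*t) \<le> t*(4*4)" using mult_left_mono[OF tt assms(1)] .
  hence t3: "t^3 \<le> 16 * t" by (simp add: power3_eq_cube)
  have t3': "t^3 \<le> 4 * t^2"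
  proof -
    have "t*(t*t) \<le> 4*(t*t)" using assms by (intro mult_right_mono) auto
    thus ?thesis by (simp add: power3_eq_cube power2_eq_square)
  qed
  have P: "1 - t/6 + t^2/40 - t^3/336 \<ge> 0" using t2 t3 assms zero_le_power2[of t] by linarith
  have eq: "(1 + t/3) * (1 - t/6 + t^2/40 - t^3/336) = 1 + t * (1/6 - 11*t/360 + 3*t^2/560 - t^3/1008)"
    by (simp add: field_simps power2_eq_square power3_eq_cube power4_eq_xxxx)
  have "t * (1/6 - 11*t/360 + 3*t^2/560 - t^3/1008) \<ge> 0"
  proof (rule mult_nonneg_nonneg)
    show "0 \<le> t" using assms by simp
    have "t^2 \<ge> 0" by simp
    thus "1/6 - 11*t/360 + 3*t^2/560 - t^3/1008 \<ge> 0" using t2 t3' assms by linarith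
  qed
  hence "1 \<le> (1 + t/3) * (1 - t/6 + t^2/40 - t^3/336)" using eq by linarith
  also have "\<dots> \<le> (1 + e*t) * (1 - t/6 + t^2/40 - t^3/336)"
  proof (rule mult_right_mono[OF _ P])
    have "t/3 \<le> e*t" using mult_right_mono[OF assms(3) assms(1)] by simp
    thus "1 + t/3 \<le> 1 + e*t" by simp
  qed
  finally show ?thesis .
qed

lemma polyB: assumes "u \<ge> 0" "e \<ge> (1/3::real)"
  shows "70 * u \<le> 76 * (1 + e * u^2)"
proof -
  have "e*u^2 \<ge> u^2/3" using mult_right_mono[OF assms(2), of "u^2"] by simp
  moreover have "70*u \<le> 76 + 76*u^2/3"
  proof -
    have "0 \<le> (u - 105/76)^2" by simp
    thus ?thesis by (simp add: power2_diff power2_eq_square field_simps)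
  qed
  ultimately show ?thesis by simp
qed


lemma cell: assumes "a > 0" "s > (0::real)"
  shows "exp (-(s^2/2)*(c-\<mu>)^2) * integral {c-a..c+a} (\<lambda>x. exp (-(s^2/2)*(x-c)^2))
         \<le> integral {c-a..c+a} (\<lambda>x. exp (-(s^2/2)*(x-\<mu>)^2))"
proof -
  define g where "g = (\<lambda>x. exp (-(s^2/2)*(x-c)^2))"
  define f where "f = (\<lambda>x. exp (-(s^2/2)*(x-\<mu>)^2))"
  define k where "k = s^2*(c-\<mu>)"
  define F where "F = f c"
  have gi: "(g has_integral integral {c-a..c+a} g) {c-a..c+a}" unfolding g_def
    by (intro integrable_integral integrable_continuous_interval continuous_intros)
  have fi: "(f has_integral integral {c-a..c+a} f) {c-a..c+a}" unfolding f_def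
    by (intro integrable_integral integrable_continuous_interval continuous_intros)
  have oi: "((\<lambda>x. g x * (x-c)) has_integral 0) {c-a..c+a}"
    unfolding g_def using odd_int[OF assms] .
  have hi: "((\<lambda>x. F * (g x - k * (g x * (x-c)))) has_integral F * (integral {c-a..c+a} g - k*0)) {c-a..c+a}"
    by (intro has_integral_mult_right has_integral_diff gi oi)
  have pw: "F * (g x - k * (g x * (x-c))) \<le> f x" for x
  proof -
    have "-(s^2/2)*(x-\<mu>)^2 = -(s^2/2)*(c-\<mu>)^2 + (-(s^2/2)*(x-c)^2) + (-k*(x-c))"
      by (simp add: k_def field_simps power2_eq_square)
    hence fx: "f x = F * g x * exp (-k*(x-c))"
      by (simp add: f_def F_def g_def exp_add[symmetric])
    have "1 - k*(x-c) \<le> exp (-k*(x-c))" using exp_ge_add_one_self[of "-k*(x-c)"] by simp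
    moreover have "F * g x \<ge> 0" by (simp add: F_def f_def g_def)
    ultimately have "F * g x * (1 - k*(x-c)) \<le> F * g x * exp (-k*(x-c))"
      by (rule mult_left_mono)
    thus ?thesis using fx by (simp add: algebra_simps)
  qed
  have "F * (integral {c-a..c+a} g - k*0) \<le> integral {c-a..c+a} f"
    using has_integral_le[OF hi fi] pw by blast
  thus ?thesis by (simp add: F_def f_def g_def)
qed

lemma lowb: assumes "0 < b" "b \<le> a" "s > (0::real)"
  shows "2*(b - s^2*b^3/6 + s^4*b^5/40 - s^6*b^7/336) \<le> integral {c-a..c+a} (\<lambda>x. exp (-(s^2/2)*(x-c)^2))"
proof -
  define g where "g = (\<lambda>x. exp (-(s^2/2)*(x-c)^2))"
  have gi: "(g has_integral integral {c-b..c+b} g) {c-b..c+b}" unfolding g_def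
    by (intro integrable_integral integrable_continuous_interval continuous_intros)
  have pw: "1 - s^2*(x-c)^2/2 + s^4*(x-c)^4/8 - s^6*(x-c)^6/48 \<le> g x" for x
  proof -
    have "0 \<le> s^2*(x-c)^2/2" by simp
    from exp_taylor3[OF this] show ?thesis
      by (simp add: g_def power_mult_distrib field_simps flip: power_mult)
  qed
  have "2*(b - s^2*b^3/6 + s^4*b^5/40 - s^6*b^7/336) \<le> integral {c-b..c+b} g"
    using has_integral_le[OF poly_int[OF assms(1)] gi] pw by blast
  also have "\<dots> \<le> integral {c-a..c+a} g"
    using assms unfolding g_def
    by (intro integral_subset_le integrable_continuous_interval continuous_intros) auto
  finally show ?thesis by (simp add: g_def)
qed

lemma Qbound: assumes "a > 0" "s > (0::real)" "e \<ge> 1/3"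
  shows "2*a \<le> (1 + e* s^2*a^2) * integral {c-a..c+a} (\<lambda>x. exp (-(s^2/2)*(x-c)^2))"
proof (cases "s*a \<le> 2")
  case True
  define t where "t = s^2*a^2"
  have t0: "0 \<le> t" by (simp add: t_def)
  have t4: "t \<le> 4"
  proof -
    have "(s*a)^2 \<le> 2^2" using True assms by (intro power_mono) auto
    thus ?thesis by (simp add: t_def power_mult_distrib)
  qed
  have "2*a*1 \<le> 2*a*((1 + e*t) * (1 - t/6 + t^2/40 - t^3/336))"
    using polyA[OF t0 t4 assms(3)] assms by (intro mult_left_mono) auto
  also have "\<dots> = (1 + e* s^2*a^2) * (2*(a - s^2*a^3/6 + s^4*a^5/40 - s^6*a^7/336))"
    by (simp add: t_def field_simps power2_eq_square power3_eq_cube eval_nat_numeral)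
  also have "\<dots> \<le> (1 + e* s^2*a^2) * integral {c-a..c+a} (\<lambda>x. exp (-(s^2/2)*(x-c)^2))"
    using lowb[OF assms(1) order_refl assms(2)] assms by (intro mult_left_mono) auto
  finally show ?thesis by simp
next
  case False
  define b where "b = 2/s"
  have b0: "0 < b" using assms by (simp add: b_def)
  have ba: "b \<le> a" using False assms by (simp add: b_def field_simps)
  have val: "2*(b - s^2*b^3/6 + s^4*b^5/40 - s^6*b^7/336) = 76/(35* s)"
    using assms by (simp add: b_def field_simps eval_nat_numeral)
  have "70*(s*a) \<le> 76*(1 + e*(s*a)^2)" using polyB[of "s*a" e] assms by simp
  hence "2*a \<le> (1 + e* s^2*a^2) * (76/(35* s))"
    using assms by (simp add: field_simps power_mult_distrib)
  also have "\<dots> \<le> (1 + e* s^2*a^2) * integral {c-a..c+a} (\<lambda>x. exp (-(s^2/2)*(x-c)^2))"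
    using lowb[OF b0 ba assms(2)] val assms by (intro mult_left_mono) auto
  finally show ?thesis .
qed


lemma sum_cells: assumes "a > (0::real)"
  shows "(\<Sum>k=0..m. integral {\<alpha> + 2*real k*a - a .. \<alpha> + 2*real k*a + a} (\<lambda>x. exp (-(s^2/2)*(x-\<mu>)^2)))
         = integral {\<alpha> - a .. \<alpha> + 2*real m*a + a} (\<lambda>x. exp (-(s^2/2)*(x-\<mu>)^2))"
proof (induction m)
  case 0
  then show ?case by simp
next
  case (Suc m)
  let ?f = "\<lambda>x. exp (-(s^2/2)*(x-\<mu>)^2)"
  have e1: "\<alpha> + 2*real (Suc m)*a - a = \<alpha> + 2*real m*a + a" by (simp add: algebra_simps)
  have e2: "\<alpha> + 2*real (Suc m)*a + a = \<alpha> + 2*real (Suc m)*a + a" by simp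
  have comb: "integral {\<alpha> - a .. \<alpha> + 2*real m*a + a} ?f + integral {\<alpha> + 2*real m*a + a .. \<alpha> + 2*real (Suc m)*a + a} ?f
        = integral {\<alpha> - a .. \<alpha> + 2*real (Suc m)*a + a} ?f"
    using assms by (intro Henstock_Kurzweil_Integration.integral_combine integrable_continuous_interval continuous_intros)
       (auto simp: algebra_simps)
  have S: "(\<Sum>k=0..Suc m. integral {\<alpha> + 2*real k*a - a .. \<alpha> + 2*real k*a + a} ?f)
     = (\<Sum>k=0..m. integral {\<alpha> + 2*real k*a - a .. \<alpha> + 2*real k*a + a} ?f) + integral {\<alpha> + 2*real (Suc m)*a - a .. \<alpha> + 2*real (Suc m)*a + a} ?f"
    by (rule sum.atLeast0_atMost_Suc)
  show ?case unfolding S Suc.IH e1 by (rule comb)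
qed

theorem mainTheorem15:
  fixes n :: nat and \<mu> s :: real
  assumes "n \<ge> 1" and "s > 0"
  shows "I_d n \<mu> s \<le> (1 + eta * s^2 / real n) * I_c \<mu> s \<and> eta \<le> 0.37"
proof
  show "eta \<le> 0.37" by (rule eta_bounds(2))
  define q where "q = sqrt (real n)"
  define a where "a = 1 / q"
  let ?f = "\<lambda>x. exp (-(s^2/2)*(x-\<mu>)^2)"
  define C where "C = 1 + eta * s^2 * a^2"
  have q0: "q > 0" using assms by (simp add: q_def)
  have a0: "a > 0" using q0 by (simp add: a_def)
  have a2: "a^2 = 1 / real n" using assms by (simp add: a_def q_def power_divide)
  have Cn: "C = 1 + eta * s^2 / real n" by (simp add: C_def a2)
  have C0: "C \<ge> 0" unfolding C_def using eta_bounds(1) by (intro add_nonneg_nonneg mult_nonneg_nonneg) auto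
  have gx: "grid_x n k = -q + 2*real k*a" for k by (simp add: grid_x_def q_def a_def)
  have gh: "grid_h n = 2*a" by (simp add: grid_h_def q_def a_def)
  have step: "2*a * ?f (grid_x n k) \<le> C * integral {grid_x n k - a .. grid_x n k + a} ?f" for k
  proof -
    let ?c = "grid_x n k"
    have "2*a * ?f ?c \<le> ((1 + eta * s^2 * a^2) * integral {?c-a..?c+a} (\<lambda>x. exp (-(s^2/2)*(x-?c)^2))) * ?f ?c"
      using Qbound[OF a0 assms(2) eta_bounds(1), of ?c] by (intro mult_right_mono) auto
    also have "\<dots> = C * (?f ?c * integral {?c-a..?c+a} (\<lambda>x. exp (-(s^2/2)*(x-?c)^2)))"
      by (simp add: C_def)
    also have "\<dots> \<le> C * integral {?c-a..?c+a} ?f"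
      using cell[OF a0 assms(2), of ?c \<mu>] C0 by (intro mult_left_mono) auto
    finally show ?thesis .
  qed
  have "I_d n \<mu> s = (\<Sum>k=0..n. 2*a * ?f (grid_x n k))"
    unfolding I_d_def gh by (simp add: sum_distrib_left)
  also have "\<dots> \<le> (\<Sum>k=0..n. C * integral {grid_x n k - a .. grid_x n k + a} ?f)"
    by (intro sum_mono step)
  also have "\<dots> = C * (\<Sum>k=0..n. integral {-q + 2*real k*a - a .. -q + 2*real k*a + a} ?f)"
    by (simp add: sum_distrib_left gx)
  also have "\<dots> = C * integral {-q - a .. -q + 2*real n*a + a} ?f"
    using sum_cells[OF a0, where m=n and \<alpha>="-q" and s=s and \<mu>=\<mu>] by simp
  also have "\<dots> \<le> C * I_c \<mu> s"
    unfolding I_c_def using C0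
    by (intro mult_left_mono integral_subset_le integrable_continuous_interval continuous_intros
        gauss_int assms(2)) auto
  finally show "I_d n \<mu> s \<le> (1 + eta * s^2 / real n) * I_c \<mu> s" by (simp add: Cn)
qed

end
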